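(* Let $M\ge4$ be even and $1<\alpha\le2$. Then every eigenvalue $\lambda_{T_2}$ of the 2-level Toeplitz matrix $T_2=I\otimes T_1+T_1\otimes I\in\mathbb{R}^{M^2\times M^2}$ satisfies $$\frac{4\Delta t\,\theta}{(\mathrm{b}-\mathrm{a})^{\alpha}}<\lambda_{T_2}<\frac{4\Delta t}{h^{\alpha}}\left[\frac{\Gamma(\alpha+1)}{\Gamma(\alpha/2+1)^2}-\frac{\theta h^{\alpha}}{(\mathrm{b}-\mathrm{a})^{\alpha}}\right].$$
   Context: Let $\mathrm{a}<\mathrm{b}$, $h=(\mathrm{b}-\mathrm{a})/(M+1)$, $\Delta t>0$, $\mu=\Delta t/h^{\alpha}$. For $k\in\mathbb{Z}$ let $c_k=\frac{(-1)^k\Gamma(\alpha+1)}{\Gamma(\alpha/2-k+1)\Gamma(\alpha/2+k+1)}$. Let $T_1=\mu T_0\in\mathbb{R}^{M\times M}$ where $T_0$ is the symmetric Toeplitz matrix with entries $[T_0]_{i,j}=c_{i-j}$. The constant $\theta$ is $$\theta=\frac{\left(1-\frac{1+\alpha}{5+\alpha/2}\right)^{5+\frac{\alpha}{2}}e^{1+\alpha}\Gamma(\alpha+1)\sin\left(\frac{\pi\alpha}{2}\right)}{\pi\alpha}.$$ $I$ is the $M\times M$ identity and $\otimes$ the Kronecker product. *)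

theory Defs
  imports "HOL-Analysis.Analysis" "Jordan_Normal_Form.Char_Poly"
begin

definition kron :: "'a :: times mat \<Rightarrow> 'a mat \<Rightarrow> 'a mat" where
  "kron A B = mat (dim_row A * dim_row B) (dim_col A * dim_col B)
     (\<lambda>(i, j). A $$ (i div dim_row B, j div dim_col B) * B $$ (i mod dim_row B, j mod dim_col B))"

text \<open>Coefficients c_k of the fractional centred difference; division by Gamma
  is written via the reciprocal Gamma function rGamma (1/Gamma at poles is 0).\<close>
definition frac_coeff :: "real \<Rightarrow> int \<Rightarrow> real" where
  "frac_coeff \<alpha> k = (-1) powi k * Gamma (\<alpha> + 1)
      * rGamma (\<alpha>/2 - of_int k + 1) * rGamma (\<alpha>/2 + of_int k + 1)"

definition T0 :: "real \<Rightarrow> nat \<Rightarrow> real mat" where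
  "T0 \<alpha> M = mat M M (\<lambda>(i, j). frac_coeff \<alpha> (int i - int j))"

definition theta :: "real \<Rightarrow> real" where
  "theta \<alpha> = (1 - (1 + \<alpha>) / (5 + \<alpha>/2)) powr (5 + \<alpha>/2) * exp (1 + \<alpha>)
      * Gamma (\<alpha> + 1) * sin (pi * \<alpha> / 2) / (pi * \<alpha>)"

end

theory Submission
  imports Defs
begin


lemma fc_sym: "frac_coeff \<alpha> (- k) = frac_coeff \<alpha> k"
  unfolding frac_coeff_def
  by (simp add: power_int_minus_one_minus algebra_simps)

lemma fc_nat: "frac_coeff \<alpha> (int k) = (-1)^k * Gamma (\<alpha> + 1)
      * rGamma (\<alpha>/2 - real k + 1) * rGamma (\<alpha>/2 + real k + 1)"
  unfolding frac_coeff_def by simp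

lemma fc_rec: "frac_coeff \<alpha> (int (Suc k)) * (\<alpha>/2 + real k + 1) = - ((\<alpha>/2 - real k) * frac_coeff \<alpha> (int k))"
proof -
  define A where "A = rGamma (\<alpha>/2 - real k + 1)"
  define B where "B = rGamma (\<alpha>/2 + real k + 2)"
  have r1: "rGamma (\<alpha>/2 - real (Suc k) + 1) = (\<alpha>/2 - real k) * A"
    using rGamma_plus1[of "\<alpha>/2 - real k"] unfolding A_def by simp
  have r2: "rGamma (\<alpha>/2 + real k + 1) = (\<alpha>/2 + real k + 1) * B"
    using rGamma_plus1[of "\<alpha>/2 + real k + 1"] unfolding B_def by (simp add: algebra_simps)
  have r3: "rGamma (\<alpha>/2 + real (Suc k) + 1) = B"
    unfolding B_def by (simp add: algebra_simps)
  have e1: "frac_coeff \<alpha> (int (Suc k)) = - ((-1)^k * Gamma (\<alpha> + 1) * ((\<alpha>/2 - real k) * A) * B)"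
    unfolding fc_nat r1 r3 by simp
  have e2: "frac_coeff \<alpha> (int k) = (-1)^k * Gamma (\<alpha> + 1) * A * ((\<alpha>/2 + real k + 1) * B)"
    unfolding fc_nat r2 A_def by simp
  show ?thesis unfolding e1 e2 by (simp add: field_simps)
qed

lemma rGamma_reflection_real: "rGamma (x::real) * rGamma (1 - x) = sin (pi * x) / pi"
proof -
  have "complex_of_real (rGamma x * rGamma (1 - x)) = complex_of_real (sin (pi * x) / pi)"
    using rGamma_reflection_complex[of "complex_of_real x"]
    by (simp add: rGamma_complex_of_real[symmetric] sin_of_real[symmetric])
  then show ?thesis using of_real_eq_iff by blast
qed

definition ac :: "real \<Rightarrow> nat \<Rightarrow> real" where "ac \<alpha> k = \<bar>frac_coeff \<alpha> (int k)\<bar>"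
definition Ss :: "real \<Rightarrow> nat \<Rightarrow> real" where "Ss \<alpha> n = (\<Sum>k<n. ac \<alpha> (Suc k))"

lemma c0_eq: "frac_coeff \<alpha> 0 = Gamma (\<alpha> + 1) / Gamma (\<alpha>/2 + 1)^2"
  unfolding frac_coeff_def by (simp add: rGamma_inverse_Gamma power2_eq_square field_simps)

lemma c0_pos: assumes "0 < \<alpha>" shows "frac_coeff \<alpha> 0 > 0"
proof -
  have "Gamma (\<alpha> + 1) > 0" "Gamma (\<alpha>/2 + 1) > 0" using assms by auto
  then show ?thesis unfolding c0_eq by simp
qed

lemma ac_rec: assumes "1 \<le> k" "\<alpha> \<le> 2" "0 < \<alpha>"
  shows "ac \<alpha> (Suc k) * (\<alpha>/2 + real k + 1) = (real k - \<alpha>/2) * ac \<alpha> k"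
proof -
  have "\<bar>frac_coeff \<alpha> (int (Suc k)) * (\<alpha>/2 + real k + 1)\<bar> = \<bar>(\<alpha>/2 - real k) * frac_coeff \<alpha> (int k)\<bar>"
    by (simp only: fc_rec abs_minus_cancel)
  moreover have "\<bar>\<alpha>/2 + real k + 1\<bar> = \<alpha>/2 + real k + 1" using assms by simp
  moreover have "\<bar>\<alpha>/2 - real k\<bar> = real k - \<alpha>/2" using assms by simp
  ultimately show ?thesis unfolding ac_def by (simp add: abs_mult)
qed

lemma ac_1: assumes "0 < \<alpha>"
  shows "ac \<alpha> 1 * (\<alpha>/2 + 1) = \<alpha>/2 * frac_coeff \<alpha> 0"
proof -
  have "\<bar>frac_coeff \<alpha> (int (Suc 0)) * (\<alpha>/2 + real 0 + 1)\<bar> = \<bar>(\<alpha>/2 - real 0) * frac_coeff \<alpha> (int 0)\<bar>"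
    by (simp only: fc_rec abs_minus_cancel)
  then show ?thesis using assms c0_pos[OF assms] unfolding ac_def by (simp add: abs_mult)
qed

lemma ac_1_pos: assumes "0 < \<alpha>" shows "ac \<alpha> 1 > 0"
proof -
  have "ac \<alpha> 1 * (\<alpha>/2 + 1) > 0" using ac_1[OF assms] c0_pos[OF assms] assms by (metis divide_pos_pos mult_pos_pos zero_less_numeral)
  moreover have "\<alpha>/2 + 1 > 0" using assms by simp
  ultimately show ?thesis by (simp add: zero_less_mult_iff)
qed

lemma Ss_id: assumes "\<alpha> \<le> 2" "0 < \<alpha>"
  shows "\<alpha> * frac_coeff \<alpha> 0 - 2 * \<alpha> * Ss \<alpha> n = (2 * real n + 2 + \<alpha>) * ac \<alpha> (Suc n)"
proof (induction n)
  case 0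
  then show ?case using ac_1[OF assms(2)] by (simp add: Ss_def algebra_simps)
next
  case (Suc n)
  have r: "ac \<alpha> (Suc (Suc n)) * (\<alpha>/2 + real (Suc n) + 1) = (real (Suc n) - \<alpha>/2) * ac \<alpha> (Suc n)"
    using ac_rec[of "Suc n"] assms by simp
  have "\<alpha> * frac_coeff \<alpha> 0 - 2 * \<alpha> * Ss \<alpha> (Suc n) = (2 * real n + 2 + \<alpha>) * ac \<alpha> (Suc n) - 2 * \<alpha> * ac \<alpha> (Suc n)"
    using Suc.IH by (simp add: Ss_def algebra_simps)
  also have "\<dots> = 2 * ((real (Suc n) - \<alpha>/2) * ac \<alpha> (Suc n))" by (simp add: algebra_simps)
  also have "\<dots> = (2 * real (Suc n) + 2 + \<alpha>) * ac \<alpha> (Suc (Suc n))"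
    unfolding r[symmetric] by (simp add: algebra_simps)
  finally show ?case .
qed

lemma ac_M: assumes "0 < \<alpha>" "\<alpha> \<le> 2" "2 \<le> M"
  shows "ac \<alpha> M = Gamma (\<alpha> + 1) * sin (pi * \<alpha> / 2) / pi * Gamma (real M - \<alpha>/2)
            / Gamma (real M - \<alpha>/2 + \<alpha> + 1)"
proof -
  define x where "x = real M - \<alpha>/2"
  have xpos: "x > 0" using assms unfolding x_def by simp
  have G: "Gamma x > 0" using xpos by simp
  have rfl: "rGamma x * rGamma (1 - x) = sin (pi * x) / pi" by (rule rGamma_reflection_real)
  have r1: "rGamma (\<alpha>/2 - real M + 1) = Gamma x * sin (pi * x) / pi"
  proof -
    have h: "1 - x = \<alpha>/2 - real M + 1" unfolding x_def by simp
    have one: "Gamma x * rGamma x = 1" using G by (simp add: rGamma_inverse_Gamma)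
    have "rGamma (1 - x) = (Gamma x * rGamma x) * rGamma (1 - x)" by (simp only: one mult_1_left)
    also have "\<dots> = Gamma x * (rGamma x * rGamma (1 - x))" by (simp only: mult.assoc)
    also have "\<dots> = Gamma x * (sin (pi * x) / pi)" by (simp only: rfl)
    finally have "rGamma (1 - x) = Gamma x * (sin (pi * x) / pi)" .
    then show ?thesis by (simp only: h times_divide_eq_right)
  qed
  have sx: "sin (pi * x) = - ((-1)^M * sin (pi * \<alpha> / 2))"
  proof -
    have "pi * x = real M * pi - pi * \<alpha> / 2" unfolding x_def by (simp add: algebra_simps)
    then show ?thesis by (simp add: sin_diff sin_npi cos_npi)
  qed
  have r2: "rGamma (\<alpha>/2 + real M + 1) = 1 / Gamma (x + \<alpha> + 1)"
  proof -
    have "\<alpha>/2 + real M + 1 = x + \<alpha> + 1" unfolding x_def by simp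
    then show ?thesis by (simp add: rGamma_inverse_Gamma inverse_eq_divide)
  qed
  have sinnn: "sin (pi * \<alpha> / 2) \<ge> 0" using assms by (intro sin_ge_zero) auto
  have Gp: "Gamma (x + \<alpha> + 1) > 0" "Gamma (\<alpha> + 1) > 0" using xpos assms by auto
  have "ac \<alpha> M = \<bar>(-1)^M * Gamma (\<alpha> + 1) * (Gamma x * (- ((-1)^M * sin (pi * \<alpha> / 2))) / pi) * (1 / Gamma (x + \<alpha> + 1))\<bar>"
    unfolding ac_def fc_nat r1 r2 sx by simp
  also have "\<dots> = Gamma (\<alpha> + 1) * sin (pi * \<alpha> / 2) / pi * Gamma x / Gamma (x + \<alpha> + 1)"
    using sinnn Gp G by (simp add: abs_mult power_abs)
  finally show ?thesis unfolding x_def .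
qed

lemma Gamma_shift_bound: fixes x t :: real assumes "x > 0" "0 \<le> t" "t \<le> 1"
  shows "Gamma (x + t) \<le> x powr t * Gamma x"
proof -
  have c: "(ln \<circ> Gamma) ((1 - t) * x + t * (x + 1)) \<le> (1 - t) * (ln \<circ> Gamma) x + t * (ln \<circ> Gamma) (x + 1)"
    using convex_onD[OF log_convex_Gamma_real, of t x "x+1"] assms by simp
  have "(1 - t) * x + t * (x + 1) = x + t" by (simp add: algebra_simps)
  moreover have "Gamma (x + 1) = x * Gamma x" using assms by (simp add: Gamma_plus1 nonpos_Ints_def) 
  ultimately have "ln (Gamma (x + t)) \<le> (1 - t) * ln (Gamma x) + t * ln (x * Gamma x)"
    using c by simp
  also have "\<dots> = ln (Gamma x) + t * ln x" proof -
    have gx: "Gamma x > 0" using assms by simp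
    have "ln (x * Gamma x) = ln x + ln (Gamma x)" using gx assms by (simp add: ln_mult_pos)
    then show ?thesis by (simp add: algebra_simps)
  qed
  finally have "exp (ln (Gamma (x + t))) \<le> exp (ln (Gamma x) + t * ln x)" by simp
  moreover have "Gamma x > 0" "Gamma (x + t) > 0" using assms by auto
  moreover have "exp (ln (Gamma x) + t * ln x) = x powr t * Gamma x"
    using assms \<open>Gamma x > 0\<close> by (simp add: exp_add powr_def)
  moreover have "exp (ln (Gamma (x + t))) = Gamma (x + t)" using \<open>Gamma (x + t) > 0\<close> by simp
  ultimately show ?thesis by linarith
qed

lemma K_le1: fixes \<alpha> :: real assumes "0 < \<alpha>" "\<alpha> \<le> 2"
  shows "(1 - (1 + \<alpha>) / (5 + \<alpha>/2)) powr (5 + \<alpha>/2) * exp (1 + \<alpha>) \<le> 1"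
proof -
  define y where "y = 1 - (1 + \<alpha>) / (5 + \<alpha>/2)"
  have ypos: "y > 0" unfolding y_def using assms by (simp add: field_simps)
  have "ln y \<le> y - 1" using ypos by (rule ln_le_minus_one)
  then have "(5 + \<alpha>/2) * ln y \<le> (5 + \<alpha>/2) * (y - 1)" using assms by (intro mult_left_mono) auto
  also have "(5 + \<alpha>/2) * (y - 1) = - (1 + \<alpha>)" unfolding y_def using assms by (simp add: field_simps)
  finally have "(5 + \<alpha>/2) * ln y + (1 + \<alpha>) \<le> 0" by simp
  then have "exp ((5 + \<alpha>/2) * ln y + (1 + \<alpha>)) \<le> 1" by simp
  then show ?thesis using ypos unfolding y_def[symmetric] by (simp add: powr_def exp_add)
qed

lemma D_bound: assumes "1 < \<alpha>" "\<alpha> \<le> 2" "2 \<le> M"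
  shows "2 * theta \<alpha> / (real M + 1) powr \<alpha> \<le> (2 * real M + \<alpha>) / \<alpha> * ac \<alpha> M"
proof -
  define x where "x = real M - \<alpha>/2"
  have xpos: "x > 0" using assms unfolding x_def by simp
  define W where "W = Gamma (\<alpha> + 1) * sin (pi * \<alpha> / 2) / pi"
  define K where "K = (1 - (1 + \<alpha>) / (5 + \<alpha>/2)) powr (5 + \<alpha>/2) * exp (1 + \<alpha>)"
  define Q where "Q = (x + \<alpha> - 1) * x powr (\<alpha> - 1)"
  have sinnn: "sin (pi * \<alpha> / 2) \<ge> 0" using assms by (intro sin_ge_zero) auto
  have Wnn: "W \<ge> 0" unfolding W_def using sinnn assms by simp
  have K1: "K \<le> 1" unfolding K_def using K_le1 assms by simp
  have th: "theta \<alpha> = K * W / \<alpha>" unfolding theta_def K_def W_def by (simp add: field_simps)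
  have acM: "ac \<alpha> M = W * Gamma x / Gamma (x + \<alpha> + 1)"
    using ac_M[of \<alpha> M] assms unfolding W_def x_def by simp
  have Gx: "Gamma x > 0" using xpos by simp
  have Qpos: "Q > 0" unfolding Q_def using xpos assms by simp
  have xa: "x + \<alpha> > 0" using xpos assms by simp
  have g1: "Gamma (x + \<alpha> + 1) = (x + \<alpha>) * Gamma (x + \<alpha>)"
    using xa by (intro Gamma_plus1) (auto simp: nonpos_Ints_def)
  have g2: "Gamma (x + \<alpha>) = (x + \<alpha> - 1) * Gamma (x + (\<alpha> - 1))"
    using Gamma_plus1[of "x + \<alpha> - 1"] xpos assms by (auto simp: nonpos_Ints_def algebra_simps)
  have g3: "Gamma (x + (\<alpha> - 1)) \<le> x powr (\<alpha> - 1) * Gamma x"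
    using Gamma_shift_bound[of x "\<alpha> - 1"] xpos assms by simp
  have "Gamma (x + \<alpha> + 1) \<le> (x + \<alpha>) * Q * Gamma x"
    unfolding g1 g2 Q_def using g3 xpos assms
    by (simp add: mult.assoc mult_left_mono)
  moreover have "Gamma (x + \<alpha> + 1) > 0" using xa by simp
  ultimately have "Gamma x / ((x + \<alpha>) * Q * Gamma x) \<le> Gamma x / Gamma (x + \<alpha> + 1)"
    using Gx by (intro divide_left_mono) auto
  then have "1 / ((x + \<alpha>) * Q) \<le> Gamma x / Gamma (x + \<alpha> + 1)" using Gx by simp
  then have A: "W / ((x + \<alpha>) * Q) \<le> ac \<alpha> M"
    unfolding acM using Wnn by (metis mult_left_mono times_divide_eq_right mult_1_right)
  have Qle: "Q \<le> (real M + 1) powr \<alpha>"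
  proof -
    have "x + \<alpha> - 1 \<le> real M + 1" unfolding x_def using assms by simp
    moreover have "x powr (\<alpha> - 1) \<le> (real M + 1) powr (\<alpha> - 1)"
      using xpos assms unfolding x_def by (intro powr_mono2) auto
    ultimately have "Q \<le> (real M + 1) * (real M + 1) powr (\<alpha> - 1)"
      unfolding Q_def using xpos assms by (intro mult_mono) auto
    also have "\<dots> = (real M + 1) powr \<alpha>"
      by (simp add: powr_mult_base)
    finally show ?thesis .
  qed
  have "2 * theta \<alpha> / (real M + 1) powr \<alpha> = 2 * K * W / (\<alpha> * (real M + 1) powr \<alpha>)"
    unfolding th by simp
  also have "\<dots> \<le> 2 * W / (\<alpha> * (real M + 1) powr \<alpha>)"
    using K1 Wnn assms by (intro divide_right_mono) (use mult_right_mono[OF K1 Wnn] in auto)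
  also have "\<dots> \<le> 2 * W / (\<alpha> * Q)"
    using Qle Qpos Wnn assms by (intro divide_left_mono) auto
  also have "\<dots> = (2 * real M + \<alpha>) / \<alpha> * (W / ((x + \<alpha>) * Q))"
  proof -
    have xa2: "x + \<alpha> = (2 * real M + \<alpha>) / 2" unfolding x_def by simp
    have p: "2 * real M + \<alpha> > 0" using assms by simp
    have gen: "\<And>u::real. u \<noteq> 0 \<Longrightarrow> Q \<noteq> 0 \<Longrightarrow> \<alpha> \<noteq> 0 \<Longrightarrow> 2 * W / (\<alpha> * Q) = u / \<alpha> * (W / (u / 2 * Q))"
      by (simp add: field_simps)
    show ?thesis unfolding xa2 using Qpos p assms by (intro gen) auto
  qed
  also have "\<dots> \<le> (2 * real M + \<alpha>) / \<alpha> * ac \<alpha> M"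
    using A assms by (intro mult_left_mono) auto
  finally show ?thesis .
qed

lemma R_eq: assumes "p < M"
  shows "(\<Sum>r\<in>{..<M}-{p}. \<bar>frac_coeff \<alpha> (int p - int r)\<bar>) = Ss \<alpha> p + Ss \<alpha> (M - 1 - p)"
proof -
  have set: "{..<M}-{p} = {..<p} \<union> {Suc p..<M}" using assms by auto
  have l: "(\<Sum>r<p. \<bar>frac_coeff \<alpha> (int p - int r)\<bar>) = Ss \<alpha> p"
  proof -
    have "(\<Sum>r<p. \<bar>frac_coeff \<alpha> (int p - int r)\<bar>) = (\<Sum>r<p. ac \<alpha> (Suc (p - Suc r)))"
      by (intro sum.cong) (auto simp: ac_def of_nat_diff Suc_diff_Suc)
    also have "\<dots> = (\<Sum>r<p. ac \<alpha> (Suc r))"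
      by (rule sum.nat_diff_reindex)
    finally show ?thesis unfolding Ss_def .
  qed
  have r: "(\<Sum>r\<in>{Suc p..<M}. \<bar>frac_coeff \<alpha> (int p - int r)\<bar>) = Ss \<alpha> (M - 1 - p)"
  proof -
    have "{Suc p..<M} = {0 + Suc p..<(M - 1 - p) + Suc p}" using assms by auto
    then have "(\<Sum>r\<in>{Suc p..<M}. \<bar>frac_coeff \<alpha> (int p - int r)\<bar>)
        = (\<Sum>i\<in>{0..<M - 1 - p}. \<bar>frac_coeff \<alpha> (int p - int (i + Suc p))\<bar>)"
      by (simp only: sum.shift_bounds_nat_ivl)
    also have "\<dots> = (\<Sum>i<M - 1 - p. ac \<alpha> (Suc i))"
    proof (intro sum.cong)
      fix i assume "i \<in> {..<M - 1 - p}"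
      have "int p - int (i + Suc p) = - int (Suc i)" by simp
      then show "\<bar>frac_coeff \<alpha> (int p - int (i + Suc p))\<bar> = ac \<alpha> (Suc i)"
        unfolding ac_def by (simp only: fc_sym)
    qed (auto simp: atLeast0LessThan)
    finally show ?thesis unfolding Ss_def .
  qed
  show ?thesis unfolding set using l r by (subst sum.union_disjoint) auto
qed

lemma Ss_mono: "n \<le> n' \<Longrightarrow> Ss \<alpha> n \<le> Ss \<alpha> n'"
  unfolding Ss_def ac_def by (intro sum_mono2) auto

lemma Ss_pos: assumes "0 < \<alpha>" "1 \<le> n" shows "Ss \<alpha> n > 0"
proof -
  have "Ss \<alpha> 1 = ac \<alpha> 1" unfolding Ss_def by simp
  then show ?thesis using Ss_mono[OF assms(2), of \<alpha>] ac_1_pos[OF assms(1)] by simp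
qed



lemma gersh:
  fixes c :: "int \<Rightarrow> real" and w :: "nat \<Rightarrow> nat \<Rightarrow> real"
  assumes eq: "\<And>p q. p < M \<Longrightarrow> q < M \<Longrightarrow> lam * w p q =
      mu * (\<Sum>s<M. c (int q - int s) * w p s) + mu * (\<Sum>r<M. c (int p - int r) * w r q)"
    and mu: "mu > 0"
    and R: "\<And>p. p < M \<Longrightarrow> (\<Sum>r\<in>{..<M}-{p}. \<bar>c (int p - int r)\<bar>) \<le> E"
    and R0: "(\<Sum>r\<in>{..<M}-{0}. \<bar>c (int 0 - int r)\<bar>) < E"
    and c1: "c 1 \<noteq> 0"
    and nz: "p0 < M" "q0 < M" "w p0 q0 \<noteq> 0"
  shows "\<bar>lam - 2 * mu * c 0\<bar> < 2 * mu * E"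
proof (rule ccontr)
  assume "\<not> ?thesis"
  then have H: "2 * mu * E \<le> \<bar>lam - 2 * mu * c 0\<bar>" by simp
  define I where "I = {..<M} \<times> {..<M}"
  define m where "m = Max ((\<lambda>(p,q). \<bar>w p q\<bar>) ` I)"
  have fin: "finite ((\<lambda>(p,q). \<bar>w p q\<bar>) ` I)" unfolding I_def by simp
  have mge: "\<bar>w p q\<bar> \<le> m" if "p < M" "q < M" for p q
    unfolding m_def using fin that by (intro Max_ge) (auto simp: I_def)
  have ne: "(\<lambda>(p,q). \<bar>w p q\<bar>) ` I \<noteq> {}" using nz unfolding I_def by auto
  obtain pm qm where pm: "pm < M" "qm < M" "\<bar>w pm qm\<bar> = m"
    using Max_in[OF fin ne] unfolding m_def[symmetric] by (auto simp: I_def)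
  have mpos: "m > 0" using mge[OF nz(1,2)] nz(3) by simp
  have Rnn: "0 \<le> E" using R0 by (meson le_less_trans sum_nonneg abs_ge_zero less_imp_le)
  have step: "p \<noteq> 0 \<and> \<bar>w (p - 1) q\<bar> = m" if pq: "p < M" "q < M" "\<bar>w p q\<bar> = m" for p q
  proof -
    define A where "A = (\<Sum>s\<in>{..<M}-{q}. c (int q - int s) * w p s)"
    define B where "B = (\<Sum>r\<in>{..<M}-{p}. c (int p - int r) * w r q)"
    define Bs where "Bs = (\<Sum>r\<in>{..<M}-{p}. \<bar>c (int p - int r)\<bar> * \<bar>w r q\<bar>)"
    define Rp where "Rp = (\<Sum>r\<in>{..<M}-{p}. \<bar>c (int p - int r)\<bar>)"
    have s1: "(\<Sum>s<M. c (int q - int s) * w p s) = c 0 * w p q + A"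
      unfolding A_def using pq by (subst sum.remove[of _ q]) auto
    have s2: "(\<Sum>r<M. c (int p - int r) * w r q) = c 0 * w p q + B"
      unfolding B_def using pq by (subst sum.remove[of _ p]) auto
    have e1: "(lam - 2 * mu * c 0) * w p q = mu * (A + B)"
      using eq[OF pq(1,2)] unfolding s1 s2 by (simp add: algebra_simps)
    have "\<bar>lam - 2 * mu * c 0\<bar> * m = mu * \<bar>A + B\<bar>"
      using arg_cong[OF e1, of abs] pq(3) mu by (simp add: abs_mult)
    also have "\<dots> \<le> mu * (\<bar>A\<bar> + \<bar>B\<bar>)" using mu by (intro mult_left_mono abs_triangle_ineq) auto
    finally have t1: "\<bar>lam - 2 * mu * c 0\<bar> * m \<le> mu * (\<bar>A\<bar> + \<bar>B\<bar>)" .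
    have "\<bar>A\<bar> \<le> (\<Sum>s\<in>{..<M}-{q}. \<bar>c (int q - int s) * w p s\<bar>)" unfolding A_def by (rule sum_abs)
    also have "\<dots> \<le> (\<Sum>s\<in>{..<M}-{q}. \<bar>c (int q - int s)\<bar> * m)"
      using mge pq by (intro sum_mono) (auto simp: abs_mult intro: mult_left_mono)
    also have "\<dots> = (\<Sum>s\<in>{..<M}-{q}. \<bar>c (int q - int s)\<bar>) * m" by (simp add: sum_distrib_right)
    also have "\<dots> \<le> E * m" using R[OF pq(2)] mpos by (intro mult_right_mono) auto
    finally have Ab: "\<bar>A\<bar> \<le> E * m" .
    have Bb: "\<bar>B\<bar> \<le> Bs" unfolding B_def Bs_def
      by (rule order_trans[OF sum_abs]) (simp add: abs_mult)
    have "2 * mu * E * m \<le> \<bar>lam - 2 * mu * c 0\<bar> * m" using H mpos by (intro mult_right_mono) auto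
    with t1 Ab Bb have "2 * mu * E * m \<le> mu * (E * m + Bs)"
      by (smt (verit, best) mu mult_left_mono)
    then have EB: "E * m \<le> Bs" using mu by (simp add: algebra_simps)
    have Bs_le: "Bs \<le> Rp * m" unfolding Bs_def Rp_def sum_distrib_right
      using mge pq by (intro sum_mono) (auto intro: mult_left_mono)
    have p0: "p \<noteq> 0"
    proof
      assume "p = 0"
      then have "Rp * m < E * m" unfolding Rp_def using R0 mpos by simp
      with Bs_le EB show False by simp
    qed
    have "\<bar>w (p - 1) q\<bar> = m"
    proof (rule ccontr)
      assume ne: "\<bar>w (p - 1) q\<bar> \<noteq> m"
      have lt: "\<bar>w (p - 1) q\<bar> < m" using ne mge[of "p - 1" q] pq by linarith
      have cp: "c (int p - int (p - 1)) = c 1" using p0 by (simp add: of_nat_diff)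
      have "Bs < (\<Sum>r\<in>{..<M}-{p}. \<bar>c (int p - int r)\<bar> * m)" unfolding Bs_def
      proof (rule sum_strict_mono_ex1)
        show "\<forall>x\<in>{..<M} - {p}. \<bar>c (int p - int x)\<bar> * \<bar>w x q\<bar> \<le> \<bar>c (int p - int x)\<bar> * m"
          using mge pq by (auto intro: mult_left_mono)
        show "\<exists>a\<in>{..<M} - {p}. \<bar>c (int p - int a)\<bar> * \<bar>w a q\<bar> < \<bar>c (int p - int a)\<bar> * m"
          using p0 pq lt c1 cp by (intro bexI[of _ "p - 1"]) auto
      qed simp
      also have "\<dots> = Rp * m" unfolding Rp_def by (simp add: sum_distrib_right)
      also have "\<dots> \<le> E * m" using R[OF pq(1)] mpos unfolding Rp_def by (intro mult_right_mono) auto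
      finally show False using EB by simp
    qed
    with p0 show ?thesis by simp
  qed
  have key: "p < M \<longrightarrow> (\<forall>q<M. \<bar>w p q\<bar> \<noteq> m)" for p
  proof (induction p)
    case 0
    then show ?case using step by blast
  next
    case (Suc p)
    then show ?case using step[of "Suc p"] by auto
  qed
  then show False using pm by blast
qed



lemma sum_group2: "(\<Sum>j<n*M. g j) = (\<Sum>r<n. \<Sum>s<M. g (r*M + s)) " for g :: "nat \<Rightarrow> real"
proof -
  have "(\<Sum>j<n*M. g j) = (\<Sum>r<n. sum g {r*M..<r*M+M})" by (rule sum.nat_group[symmetric])
  also have "\<dots> = (\<Sum>r<n. \<Sum>s<M. g (r*M + s))"
  proof (rule sum.cong[OF refl])
    fix r
    have "sum g {0 + r*M..<M + r*M} = (\<Sum>s\<in>{0..<M}. g (s + r*M))" by (rule sum.shift_bounds_nat_ivl)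
    then show "sum g {r*M..<r*M+M} = (\<Sum>s<M. g (r*M + s))"
      by (simp add: atLeast0LessThan add.commute)
  qed
  finally show ?thesis .
qed

lemma idx_lt: assumes "p < M" "q < (M::nat)" shows "p*M + q < M*M"
proof -
  have "p*M + q < p*M + M" using assms by simp
  also have "\<dots> = Suc p * M" by simp
  also have "\<dots> \<le> M*M" using assms by (intro mult_le_mono1) simp
  finally show ?thesis .
qed

lemma T2_eq:
  fixes T1 T2 :: "real mat" and v :: "real vec"
  assumes T1: "T1 = mu \<cdot>\<^sub>m T0 \<alpha> M" and T2: "T2 = kron (1\<^sub>m M) T1 + kron T1 (1\<^sub>m M)"
    and ev: "eigenvector T2 v lam" and M: "M > 0"
  shows "\<And>p q. p < M \<Longrightarrow> q < M \<Longrightarrow> lam * v $ (p*M+q) =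
      mu * (\<Sum>s<M. frac_coeff \<alpha> (int q - int s) * v $ (p*M+s)) + mu * (\<Sum>r<M. frac_coeff \<alpha> (int p - int r) * v $ (r*M+q))"
    and "\<exists>p<M. \<exists>q<M. v $ (p*M+q) \<noteq> 0"
proof -
  have dT1: "dim_row T1 = M" "dim_col T1 = M" unfolding T1 T0_def by simp_all
  have dT2: "dim_row T2 = M*M" "dim_col T2 = M*M" unfolding T2 kron_def using dT1 by simp_all
  have vc: "v \<in> carrier_vec (M*M)" "v \<noteq> 0\<^sub>v (M*M)" "T2 *\<^sub>v v = lam \<cdot>\<^sub>v v"
    using ev dT2 unfolding eigenvector_def by auto
  have dv: "dim_vec v = M*M" using vc by auto
  have ent: "T2 $$ (i,j) = (if i div M = j div M then 1 else 0) * (mu * frac_coeff \<alpha> (int (i mod M) - int (j mod M)))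
      + mu * frac_coeff \<alpha> (int (i div M) - int (j div M)) * (if i mod M = j mod M then 1 else 0)"
    if "i < M*M" "j < M*M" for i j
  proof -
    have b: "i div M < M" "j div M < M" "i mod M < M" "j mod M < M"
      using that M by (auto simp: less_mult_imp_div_less)
    show ?thesis unfolding T2 kron_def using that b dT1
      by (simp add: T1 T0_def)
  qed
  show "\<exists>p<M. \<exists>q<M. v $ (p*M+q) \<noteq> 0"
  proof -
    obtain i where i: "i < M*M" "v $ i \<noteq> 0" using vc dv by (auto simp: vec_eq_iff)
    have "i = (i div M)*M + i mod M" by simp
    moreover have "i div M < M" "i mod M < M" using i M by (auto simp: less_mult_imp_div_less)
    ultimately show ?thesis using i by metis
  qed
  fix p q assume pq: "p < M" "q < M"
  define i where "i = p*M+q"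
  have i: "i < M*M" "i div M = p" "i mod M = q" unfolding i_def using pq
    by (auto simp: idx_lt)
  have "lam * v $ i = (T2 *\<^sub>v v) $ i" using vc dv i by simp
  also have "\<dots> = (\<Sum>j<M*M. T2 $$ (i,j) * v $ j)"
    using dT2 dv i by (simp add: scalar_prod_def atLeast0LessThan)
  also have "\<dots> = (\<Sum>r<M. \<Sum>s<M. T2 $$ (i, r*M+s) * v $ (r*M+s))" by (rule sum_group2)
  also have "\<dots> = (\<Sum>r<M. \<Sum>s<M. (if p = r then mu * frac_coeff \<alpha> (int q - int s) * v $ (r*M+s) else 0)
      + (if q = s then mu * frac_coeff \<alpha> (int p - int r) * v $ (r*M+s) else 0))"
  proof (intro sum.cong refl)
    fix r s assume rs: "r \<in> {..<M}" "s \<in> {..<M}"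
    have j: "r*M+s < M*M" "(r*M+s) div M = r" "(r*M+s) mod M = s" using rs
      by (auto simp: idx_lt)
    show "T2 $$ (i, r*M+s) * v $ (r*M+s) = (if p = r then mu * frac_coeff \<alpha> (int q - int s) * v $ (r*M+s) else 0)
      + (if q = s then mu * frac_coeff \<alpha> (int p - int r) * v $ (r*M+s) else 0)"
      unfolding ent[OF i(1) j(1)] i j by (simp add: algebra_simps)
  qed
  also have "\<dots> = (\<Sum>r<M. \<Sum>s<M. (if p = r then mu * frac_coeff \<alpha> (int q - int s) * v $ (r*M+s) else 0))
      + (\<Sum>r<M. \<Sum>s<M. (if q = s then mu * frac_coeff \<alpha> (int p - int r) * v $ (r*M+s) else 0))"
    by (simp only: sum.distrib)
  also have "(\<Sum>r<M. \<Sum>s<M. (if p = r then mu * frac_coeff \<alpha> (int q - int s) * v $ (r*M+s) else 0))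
      = (\<Sum>r<M. (if p = r then (\<Sum>s<M. mu * frac_coeff \<alpha> (int q - int s) * v $ (r*M+s)) else 0))"
    by (intro sum.cong refl) simp
  also have "\<dots> = (\<Sum>s<M. mu * frac_coeff \<alpha> (int q - int s) * v $ (p*M+s))"
    using pq by (simp add: sum.delta)
  also have "(\<Sum>r<M. \<Sum>s<M. (if q = s then mu * frac_coeff \<alpha> (int p - int r) * v $ (r*M+s) else 0))
      = (\<Sum>r<M. mu * frac_coeff \<alpha> (int p - int r) * v $ (r*M+q))"
    using pq by (simp add: sum.delta)
  also have "(\<Sum>s<M. mu * frac_coeff \<alpha> (int q - int s) * v $ (p*M+s)) + (\<Sum>r<M. mu * frac_coeff \<alpha> (int p - int r) * v $ (r*M+q))
     = mu * (\<Sum>s<M. frac_coeff \<alpha> (int q - int s) * v $ (p*M+s)) + mu * (\<Sum>r<M. frac_coeff \<alpha> (int p - int r) * v $ (r*M+q))"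
    by (simp add: sum_distrib_left mult.assoc)
  finally show "lam * v $ (p*M+q) = mu * (\<Sum>s<M. frac_coeff \<alpha> (int q - int s) * v $ (p*M+s)) + mu * (\<Sum>r<M. frac_coeff \<alpha> (int p - int r) * v $ (r*M+q))"
    unfolding i_def .
qed


theorem lemma3:
  fixes a b dt \<alpha> lam :: real and M :: nat
  assumes "a < b" and "dt > 0"
    and "M \<ge> 4" and "even M"
    and "1 < \<alpha>" and "\<alpha> \<le> 2"
  defines "h \<equiv> (b - a) / real (M + 1)"
  defines "mu \<equiv> dt / h powr \<alpha>"
  defines "T1 \<equiv> mu \<cdot>\<^sub>m T0 \<alpha> M"
  defines "T2 \<equiv> kron (1\<^sub>m M) T1 + kron T1 (1\<^sub>m M)"
  assumes "eigenvalue T2 lam"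
  shows "4 * dt * theta \<alpha> / (b - a) powr \<alpha> < lam
    \<and> lam < 4 * dt / h powr \<alpha> * (Gamma (\<alpha> + 1) / Gamma (\<alpha>/2 + 1)^2
                                  - theta \<alpha> * h powr \<alpha> / (b - a) powr \<alpha>)"
proof -
  obtain v where ev: "eigenvector T2 v lam" using \<open>eigenvalue T2 lam\<close> unfolding eigenvalue_def by blast
  have M0: "M > 0" "M \<ge> 2" using assms(3) by auto
  note TE = T2_eq[OF meta_eq_to_obj_eq[OF T1_def] meta_eq_to_obj_eq[OF T2_def] ev M0(1)]
  obtain p0 q0 where nz: "p0 < M" "q0 < M" "v $ (p0*M+q0) \<noteq> 0" using TE(2) by blast
  define P where "P = (real M + 1) powr \<alpha>"
  have Ppos: "P > 0" unfolding P_def by simp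
  have hpos: "h > 0" unfolding h_def using assms(1) by simp
  have hP: "h powr \<alpha> = (b - a) powr \<alpha> / P"
    unfolding h_def P_def using assms(1) by (simp add: powr_divide add.commute)
  have bapos: "(b - a) powr \<alpha> > 0" using assms(1) by simp
  have mupos: "mu > 0" unfolding mu_def using hpos assms(2) by simp
  define c0 where "c0 = frac_coeff \<alpha> 0"
  define E where "E = 2 * Ss \<alpha> (M - 1)"
  have Spos: "Ss \<alpha> (M - 1) > 0" using Ss_pos[of \<alpha> "M - 1"] assms M0 by simp
  have R: "(\<Sum>r\<in>{..<M}-{p}. \<bar>frac_coeff \<alpha> (int p - int r)\<bar>) \<le> E" if "p < M" for p
  proof -
    have "p \<le> M - 1" "M - 1 - p \<le> M - 1" using that by auto
    then have "Ss \<alpha> p \<le> Ss \<alpha> (M - 1)" "Ss \<alpha> (M - 1 - p) \<le> Ss \<alpha> (M - 1)" by (auto intro: Ss_mono)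
    then show ?thesis unfolding R_eq[OF that] E_def by linarith
  qed
  have R0: "(\<Sum>r\<in>{..<M}-{0}. \<bar>frac_coeff \<alpha> (int 0 - int r)\<bar>) < E"
    unfolding R_eq[OF M0(1)] E_def using Spos by (simp add: Ss_def)
  have c1: "frac_coeff \<alpha> 1 \<noteq> 0" using ac_1_pos[of \<alpha>] assms unfolding ac_def by auto
  have G: "\<bar>lam - 2 * mu * frac_coeff \<alpha> 0\<bar> < 2 * mu * E"
    by (rule gersh[where w = "\<lambda>p q. v $ (p*M+q)", OF TE(1) mupos R R0 c1 nz]) auto
  have Sid: "\<alpha> * c0 - 2 * \<alpha> * Ss \<alpha> (M - 1) = (2 * real M + \<alpha>) * ac \<alpha> M"
    using Ss_id[of \<alpha> "M - 1"] assms M0 unfolding c0_def by (simp add: of_nat_diff)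
  define D where "D = (2 * real M + \<alpha>) / \<alpha> * ac \<alpha> M"
  have ED: "E = c0 - D" unfolding E_def D_def using Sid assms by (simp add: field_simps)
  have DB: "2 * theta \<alpha> / P \<le> D" unfolding D_def P_def using D_bound[of \<alpha> M] assms M0 by simp
  have c0G: "Gamma (\<alpha> + 1) / Gamma (\<alpha>/2 + 1)^2 = c0" unfolding c0_def by (simp add: c0_eq)
  have lo: "4 * dt * theta \<alpha> / (b - a) powr \<alpha> = 2 * mu * (2 * theta \<alpha> / P)"
    unfolding mu_def hP using Ppos bapos by (simp add: field_simps)
  have hi: "4 * dt / h powr \<alpha> * (Gamma (\<alpha> + 1) / Gamma (\<alpha>/2 + 1)^2 - theta \<alpha> * h powr \<alpha> / (b - a) powr \<alpha>)
      = 2 * mu * (2 * c0 - 2 * theta \<alpha> / P)"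
    unfolding c0G mu_def hP using Ppos bapos by (simp add: field_simps)
  have G': "\<bar>lam - 2 * mu * c0\<bar> < 2 * mu * (c0 - D)" using G unfolding ED c0_def .
  have "2 * mu * (2 * theta \<alpha> / P) \<le> 2 * mu * D" by (rule mult_left_mono[OF DB]) (use mupos in simp)
  moreover have "2 * mu * (2 * c0 - D) \<le> 2 * mu * (2 * c0 - 2 * theta \<alpha> / P)"
    by (rule mult_left_mono) (use DB mupos in simp_all)
  ultimately show ?thesis unfolding lo hi using G' by (auto simp: abs_less_iff algebra_simps)
qed

end
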